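(* Let $\Gamma\subseteq\mathbb{R}$ be the value group of a field $\mathcal{K}$ with a nontrivial valuation. For any function $w:2^{[n]}\to\mathbb{R}$ there exist $\lambda=(\lambda_0,\dots,\lambda_n)\in\Gamma^{n+1}$ such that the function $\lambda\cdot w$, $(\lambda\cdot w)(S)=\lambda_{|S|}+w(S)$, is strictly submodular. Moreover, if $w$ is submodular and $\Gamma$ is dense in $\mathbb{R}$, then such $\lambda$ can be chosen arbitrarily small.
   Context: $\Gamma=\mathrm{val}(\mathcal{K}^* )$, a nontrivial additive subgroup of $\mathbb{R}$. A function $F:2^{[n]}\to\mathbb{R}$ is submodular if $F(S\cap T)+F(S\cup T)\le F(S)+F(T)$ for all $S,T\subseteq[n]$, and strictly submodular if $F(S)+F(S\cup\{i,j\})<F(S\cup\{i\})+F(S\cup\{j\})$ for all $S\subseteq[n]$ and distinct $i,j\in[n]\setminus S$. *)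

theory Defs
  imports "HOL-Analysis.Analysis"
begin

text \<open>Ground set [n] = {1..n}; set functions are functions on nat sets, only their
values on subsets of {1..n} matter.\<close>

definition submodular_on :: "nat \<Rightarrow> (nat set \<Rightarrow> real) \<Rightarrow> bool" where
  "submodular_on n F \<longleftrightarrow>
     (\<forall>S T. S \<subseteq> {1..n} \<longrightarrow> T \<subseteq> {1..n} \<longrightarrow> F (S \<inter> T) + F (S \<union> T) \<le> F S + F T)"

definition strictly_submodular_on :: "nat \<Rightarrow> (nat set \<Rightarrow> real) \<Rightarrow> bool" where
  "strictly_submodular_on n F \<longleftrightarrow>
     (\<forall>S i j. S \<subseteq> {1..n} \<longrightarrow> i \<in> {1..n} - S \<longrightarrow> j \<in> {1..n} - S \<longrightarrow> i \<noteq> j \<longrightarrow>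
        F S + F (S \<union> {i, j}) < F (S \<union> {i}) + F (S \<union> {j}))"

definition lam_act :: "(nat \<Rightarrow> real) \<Rightarrow> (nat set \<Rightarrow> real) \<Rightarrow> nat set \<Rightarrow> real" where
  "lam_act lam w S = lam (card S) + w S"

definition additive_subgroup :: "real set \<Rightarrow> bool" where
  "additive_subgroup G \<longleftrightarrow> 0 \<in> G \<and> (\<forall>x\<in>G. \<forall>y\<in>G. x + y \<in> G) \<and> (\<forall>x\<in>G. - x \<in> G)"

end

theory Submission
  imports Defs
begin

lemma nat_mult_in:
  assumes "additive_subgroup G" "g \<in> G"
  shows "real N * g \<in> G"
proof (induction N)
  case 0 then show ?case using assms by (simp add: additive_subgroup_def)
next
  case (Suc N)
  have "real (Suc N) * g = real N * g + g" by (simp add: algebra_simps)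
  then show ?case using Suc assms by (simp add: additive_subgroup_def)
qed

lemma key:
  fixes g :: real and m :: nat
  assumes "\<And>S i j. S \<subseteq> {1..n} \<Longrightarrow> i \<in> {1..n} - S \<Longrightarrow> j \<in> {1..n} - S \<Longrightarrow> i \<noteq> j \<Longrightarrow>
      w S + w (S \<union> {i, j}) - w (S \<union> {i}) - w (S \<union> {j}) < 2 * real m * g"
  shows "strictly_submodular_on n (lam_act (\<lambda>k. - (real (k*k*m) * g)) w)"
  unfolding strictly_submodular_on_def lam_act_def
proof (intro allI impI)
  fix S i j
  assume h: "S \<subseteq> {1..n}" "i \<in> {1..n} - S" "j \<in> {1..n} - S" "i \<noteq> j"
  have fS: "finite S" using h(1) finite_subset by blast
  have c1: "card (S \<union> {i}) = card S + 1" using fS h by auto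
  have c2: "card (S \<union> {j}) = card S + 1" using fS h by auto
  have c3: "card (S \<union> {i, j}) = card S + 2" using fS h by auto
  define k where "k = card S"
  have e: "real ((k+2)*(k+2)*m) + real (k*k*m) - 2 * real ((k+1)*(k+1)*m) = 2 * real m"
    by (simp add: algebra_simps)
  have "- (real (k*k*m) * g) - (real ((k+2)*(k+2)*m) * g) + 2 * (real ((k+1)*(k+1)*m) * g)
        = - (2 * real m * g)"
  proof -
    have "- (real (k*k*m) * g) - (real ((k+2)*(k+2)*m) * g) + 2 * (real ((k+1)*(k+1)*m) * g)
       = - ((real ((k+2)*(k+2)*m) + real (k*k*m) - 2 * real ((k+1)*(k+1)*m)) * g)"
      by (simp add: algebra_simps)
    then show ?thesis using e by simp
  qed
  then show "- (real (card S * card S * m) * g) + w S +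
       (- (real (card (S \<union> {i, j}) * card (S \<union> {i, j}) * m) * g) + w (S \<union> {i, j}))
       < - (real (card (S \<union> {i}) * card (S \<union> {i}) * m) * g) + w (S \<union> {i}) +
         (- (real (card (S \<union> {j}) * card (S \<union> {j}) * m) * g) + w (S \<union> {j}))"
    using assms[OF h] unfolding c1 c2 c3 k_def[symmetric] by linarith
qed

theorem lemma3p1:
  fixes \<Gamma> :: "real set" and n :: nat and w :: "nat set \<Rightarrow> real"
  assumes "additive_subgroup \<Gamma>" and "\<Gamma> \<noteq> {0}"
  shows "(\<exists>lam :: nat \<Rightarrow> real. (\<forall>k\<le>n. lam k \<in> \<Gamma>) \<and> strictly_submodular_on n (lam_act lam w))
     \<and> (submodular_on n w \<and> closure \<Gamma> = UNIV \<longrightarrow>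
          (\<forall>\<epsilon>>0. \<exists>lam :: nat \<Rightarrow> real. (\<forall>k\<le>n. lam k \<in> \<Gamma> \<and> \<bar>lam k\<bar> < \<epsilon>)
               \<and> strictly_submodular_on n (lam_act lam w)))"
proof
  have inG: "- (real (k*k*m) * g) \<in> \<Gamma>" if "g \<in> \<Gamma>" for g k m
    using nat_mult_in[OF assms(1) that, of "k*k*m"] assms(1) unfolding additive_subgroup_def by blast
  obtain x where x: "x \<in> \<Gamma>" "x \<noteq> 0" using assms by (auto simp: additive_subgroup_def)
  obtain g where g: "g \<in> \<Gamma>" "g > 0"
  proof (cases "x > 0")
    case True then show ?thesis using that x by blast
  next
    case False then show ?thesis using that[of "-x"] x assms(1) by (auto simp: additive_subgroup_def)
  qed
  define d where "d = (\<lambda>(S, i, j). w S + w (S \<union> {i, j}) - w (S \<union> {i}) - w (S \<union> {j}))"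
  define A where "A = d ` (Pow {1..n} \<times> {1..n} \<times> {(1::nat)..n})"
  have fA: "finite A" unfolding A_def by simp
  obtain m :: nat where m: "Max (insert 0 A) / (2*g) < real m" using reals_Archimedean2 by blast
  have "Max (insert 0 A) < 2 * real m * g" using m g(2) by (simp add: field_simps)
  have "strictly_submodular_on n (lam_act (\<lambda>k. - (real (k*k*m) * g)) w)"
  proof (rule key)
    fix S i j assume h: "S \<subseteq> {1..n}" "i \<in> {1..n} - S" "j \<in> {1..n} - S" "i \<noteq> j"
    have "d (S, i, j) \<in> A" unfolding A_def using h by auto
    then have "d (S, i, j) \<le> Max (insert 0 A)" using fA by simp
    then show "w S + w (S \<union> {i, j}) - w (S \<union> {i}) - w (S \<union> {j}) < 2 * real m * g"
      using \<open>Max (insert 0 A) < 2 * real m * g\<close> unfolding d_def by simp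
  qed
  then show "\<exists>lam :: nat \<Rightarrow> real. (\<forall>k\<le>n. lam k \<in> \<Gamma>) \<and> strictly_submodular_on n (lam_act lam w)"
    using inG[OF g(1), of _ m] by (intro exI[of _ "\<lambda>k. - (real (k*k*m) * g)"]) blast
next
  show "submodular_on n w \<and> closure \<Gamma> = UNIV \<longrightarrow>
          (\<forall>\<epsilon>>0. \<exists>lam :: nat \<Rightarrow> real. (\<forall>k\<le>n. lam k \<in> \<Gamma> \<and> \<bar>lam k\<bar> < \<epsilon>)
               \<and> strictly_submodular_on n (lam_act lam w))"
  proof (intro impI allI)
    fix \<epsilon> :: real
    assume sm: "submodular_on n w \<and> closure \<Gamma> = UNIV" and ep: "\<epsilon> > 0"
    have np: "real (n*n) + 1 > 0" using of_nat_0_le_iff[of "n*n"] by linarith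
    define \<delta> where "\<delta> = \<epsilon> / (real (n*n) + 1)"
    have dp: "\<delta> > 0" unfolding \<delta>_def using ep np by (rule divide_pos_pos)
    have de: "(real (n*n) + 1) * \<delta> = \<epsilon>" unfolding \<delta>_def using np by simp
    have "\<delta>/2 \<in> closure \<Gamma>" using sm by simp
    then obtain g where g: "g \<in> \<Gamma>" "dist g (\<delta>/2) < \<delta>/2"
      using dp unfolding closure_approachable by (meson half_gt_zero)
    have ga: "\<bar>g - \<delta>/2\<bar> < \<delta>/2" using g(2) unfolding dist_real_def .
    have g0: "g > 0" "g < \<delta>" using ga abs_less_iff[of "g - \<delta>/2" "\<delta>/2"] by linarith+
    have inG: "- (real (k*k*1) * g) \<in> \<Gamma>" for k
      using nat_mult_in[OF assms(1) g(1), of "k*k*1"] assms(1) unfolding additive_subgroup_def by blast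
    have small: "\<bar>- (real (k*k*1) * g)\<bar> < \<epsilon>" if "k \<le> n" for k
    proof -
      have kk: "real (k*k) \<le> real (n*n)" using of_nat_mono[OF mult_le_mono[OF that that]] .
      have k0: "real (k*k) \<ge> 0" by (rule of_nat_0_le_iff)
      have n0: "real (n*n) \<ge> 0" by (rule of_nat_0_le_iff)
      have "\<bar>- (real (k*k*1) * g)\<bar> = real (k*k) * g" using g0 k0 by simp
      also have "\<dots> \<le> real (n*n) * g" using kk g0 by (intro mult_right_mono) auto
      also have "\<dots> \<le> real (n*n) * \<delta>" using n0 g0 by (intro mult_left_mono) auto
      also have "\<dots> < (real (n*n) + 1) * \<delta>" using dp by (simp add: distrib_right)
      also have "\<dots> = \<epsilon>" by (rule de)
      finally show ?thesis .
    qed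
    have "strictly_submodular_on n (lam_act (\<lambda>k. - (real (k*k*1) * g)) w)"
    proof (rule key)
      fix S i j assume h: "S \<subseteq> {1..n}" "i \<in> {1..n} - S" "j \<in> {1..n} - S" "i \<noteq> j"
      have "w ((S \<union> {i}) \<inter> (S \<union> {j})) + w ((S \<union> {i}) \<union> (S \<union> {j})) \<le> w (S \<union> {i}) + w (S \<union> {j})"
      proof -
        have sub: "submodular_on n w" using sm by (rule conjunct1)
        have A: "S \<union> {i} \<subseteq> {1..n}" "S \<union> {j} \<subseteq> {1..n}" using h by auto
        show ?thesis using sub[unfolded submodular_on_def, rule_format, OF A] .
      qed
      moreover have "(S \<union> {i}) \<inter> (S \<union> {j}) = S" using h by auto
      moreover have "(S \<union> {i}) \<union> (S \<union> {j}) = S \<union> {i, j}" by auto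
      ultimately have le: "w S + w (S \<union> {i, j}) \<le> w (S \<union> {i}) + w (S \<union> {j})" by simp
      have "2 * real 1 * g = 2 * g" by simp
      then show "w S + w (S \<union> {i, j}) - w (S \<union> {i}) - w (S \<union> {j}) < 2 * real 1 * g"
        using g0 le by linarith
    qed
    then show "\<exists>lam :: nat \<Rightarrow> real. (\<forall>k\<le>n. lam k \<in> \<Gamma> \<and> \<bar>lam k\<bar> < \<epsilon>)
               \<and> strictly_submodular_on n (lam_act lam w)"
    proof (intro exI[of _ "\<lambda>k. - (real (k*k*1) * g)"] conjI allI impI)
      fix k :: nat assume "k \<le> n"
      show "- (real (k*k*1) * g) \<in> \<Gamma>" by (rule inG)
      show "\<bar>- (real (k*k*1) * g)\<bar> < \<epsilon>" using small \<open>k \<le> n\<close> .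
    qed
  qed
qed

end
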